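(* Consider the normalised two-player, two-market Cournot game with per-period utility $u(x,a)=-2x(x+a)$ for a player playing $x$ against an opponent playing $a$. Let player 2's initial strategy be $a_0\in[-1,1]$. The players update alternately by myopic best response (a player facing opponent strategy $a$ switches to $-a/2$): at time $t=0$ player 1 updates, at $t=1$ player 2 updates, at $t=2$ player 1 updates, and so on. Let $u_t$ denote player 1's one-period utility at time $t$, evaluated at both players' strategies after the update at time $t$, and let $$g=u(-a_0/2,a_0)-u(-a_0,a_0)\ \ (\ge 0)$$ be the utility gained at the first move by the myopic best response relative to the equilibrium-mimicking response $-a_0$ (which yields utility $0$). Then $$\sum_{t=0}^{\infty}u_t=\frac{8g}{15},$$ which is strictly positive whenever $a_0\neq 0$.
   Context: Two players each have one unit of a homogeneous good (zero production and transportation cost) to split between two markets with inverse-linear demand. Strategies are normalised to numbers in $[-1,1]$ with $0$ the unique Cournot equilibrium split, and the normalised one-period utility (relative to the equilibrium utility, which is normalised to $0$) of a player playing $x$ against an opponent playing $a$ is $u(x,a)=-2x(x+a)$. An equilibrium-mimicking strategy profile is one in which every market receives the same total supply as it would in equilibrium; against opponent strategy $a_0$ this corresponds to playing $-a_0$, giving utility $0$. The myopic best response to $a$ is the maximiser of $u(\cdot,a)$, namely $-a/2$. *)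

theory Defs
  imports Complex_Main
begin

definition cu :: "real \<Rightarrow> real \<Rightarrow> real" where
  "cu x a = -2 * x * (x + a)"

definition br :: "real \<Rightarrow> real" where
  "br a = - a / 2"

text \<open>Strategy profile (player 1, player 2) after the update at time t,
  starting from player 2's initial strategy a0. Player 1 updates at even
  times, player 2 at odd times.\<close>
fun profile :: "real \<Rightarrow> nat \<Rightarrow> real \<times> real" where
  "profile a0 0 = (br a0, a0)"
| "profile a0 (Suc t) =
     (let (x, a) = profile a0 t in
      if even (Suc t) then (br a, a) else (x, br x))"

end

theory Submission
  imports Defs
begin

lemma prof_closed:
  "profile a0 (2*k) = (- a0/2 * (1/4)^k, a0 * (1/4)^k) \<and>
   profile a0 (2*k+1) = (- a0/2 * (1/4)^k, a0/4 * (1/4)^k)"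
proof (induction k)
  case 0
  then show ?case by (simp add: br_def)
next
  case (Suc k)
  have e1: "2 * Suc k = Suc (2*k+1)" by simp
  have e2: "2 * Suc k + 1 = Suc (Suc (2*k+1))" by simp
  have A: "profile a0 (2 * Suc k) = (- a0/2 * (1/4)^Suc k, a0 * (1/4)^Suc k)"
    unfolding e1 using Suc by (simp add: br_def)
  show ?case
    using A unfolding e2 by (simp add: br_def e1[symmetric])
qed

theorem theorem4:
  fixes a0 g :: real
  assumes "a0 \<in> {-1..1}"
    and "g = cu (br a0) a0 - cu (- a0) a0"
  shows "(\<lambda>t. cu (fst (profile a0 t)) (snd (profile a0 t))) sums (8 * g / 15) \<and>
         (a0 \<noteq> 0 \<longrightarrow> 8 * g / 15 > 0)"
proof -
  define f where "f = (\<lambda>t. cu (fst (profile a0 t)) (snd (profile a0 t)))"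
  have g: "g = a0^2/2" using assms(2) by (simp add: cu_def br_def power2_eq_square)
  have q: "(1/16::real)^k = (1/4)^k * (1/4)^k" for k
    by (simp add: power_mult_distrib[symmetric])
  have fe: "f (2*k) = a0^2/2 * (1/16)^k" for k
  proof -
    have "f (2*k) = cu (- a0/2 * (1/4)^k) (a0 * (1/4)^k)"
      unfolding f_def using prof_closed[of a0 k] by (simp only: fst_conv snd_conv)
    then show ?thesis unfolding q cu_def by (simp add: power2_eq_square algebra_simps)
  qed
  have fo: "f (2*k+1) = -(a0^2)/4 * (1/16)^k" for k
  proof -
    have "f (2*k+1) = cu (- a0/2 * (1/4)^k) (a0/4 * (1/4)^k)"
      unfolding f_def using prof_closed[of a0 k] by (simp only: fst_conv snd_conv)
    then show ?thesis unfolding q cu_def by (simp add: power2_eq_square algebra_simps)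
  qed
  have bnd: "norm (f t) \<le> a0^2 * (1/2)^t" for t
  proof (cases "even t")
    case True
    then obtain k where t: "t = 2*k" by auto
    have "(1/16::real)^k \<le> (1/4)^k" by (rule power_mono) auto
    hence "a0^2 * (1/16::real)^k \<le> a0^2 * (1/4)^k"
      by (rule mult_left_mono) simp
    moreover have "a0^2/2 * (1/16::real)^k \<le> a0^2 * (1/16::real)^k" by simp
    ultimately have "a0^2/2 * (1/16::real)^k \<le> a0^2 * (1/4)^k" by linarith
    moreover have "(1/2::real)^(2*k) = (1/4)^k" by (simp add: power_mult power2_eq_square)
    moreover have "norm (f t) = a0^2/2 * (1/16)^k" unfolding t fe by simp
    ultimately show ?thesis using t by simp
  next
    case False
    then obtain k where t: "t = 2*k+1" using oddE by blast
    have "(1/16::real)^k \<le> (1/4)^k" by (rule power_mono) auto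
    hence "a0^2 * (1/16::real)^k \<le> a0^2 * (1/4)^k"
      by (rule mult_left_mono) simp
    moreover have "a0^2/4 * (1/16::real)^k \<le> a0^2 * (1/16::real)^k / 2" by simp
    ultimately have "a0^2/4 * (1/16::real)^k \<le> a0^2 * ((1/4)^k / 2)" by linarith
    moreover have "(1/2::real)^(2*k+1) = (1/4)^k / 2" by (simp add: power_mult power_add power2_eq_square)
    moreover have "norm (f t) = a0^2/4 * (1/16)^k" unfolding t fo by simp
    ultimately show ?thesis using t by simp
  qed
  have sm: "summable f"
    apply (rule summable_comparison_test[of _ "\<lambda>t. a0^2 * (1/2)^t"])
    using bnd apply blast
    by (intro summable_mult summable_geometric) simp
  have grp: "(\<lambda>n. sum f {n*2..<n*2+2}) sums suminf f"
    by (rule sums_group[OF summable_sums[OF sm]]) simp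
  have pe: "sum f {n*2..<n*2+2} = a0^2/4 * (1/16)^n" for n
  proof -
    have "{n*2..<n*2+2} = {2*n, 2*n+1}" by auto
    then show ?thesis using fe[of n] fo[of n] by simp
  qed
  have "(\<lambda>n. a0^2/4 * (1/16::real)^n) sums (a0^2/4 * (1 / (1 - 1/16)))"
    by (intro sums_mult geometric_sums) simp
  moreover have "a0^2/4 * (1 / (1 - 1/16)) = 8*g/15" using g by simp
  moreover have "(\<lambda>n. sum f {n*2..<n*2+2}) = (\<lambda>n. a0^2/4 * (1/16::real)^n)"
    using pe by presburger
  ultimately have "(\<lambda>n. sum f {n*2..<n*2+2}) sums (8*g/15)" by simp
  hence "suminf f = 8*g/15" using grp sums_unique2 by blast
  hence "f sums (8*g/15)" using summable_sums[OF sm] by metis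
  moreover have "a0 \<noteq> 0 \<longrightarrow> 8 * g / 15 > 0"
  proof
    assume "a0 \<noteq> 0"
    hence "a0^2 > 0" by simp
    thus "8 * g / 15 > 0" using g by linarith
  qed
  ultimately show ?thesis unfolding f_def by blast
qed

end
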